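(* Let $f:\mathbb{E}\to\mathbb{R}\cup\{+\infty\}$ be a proper extended real function that is strongly pseudoconvex (in the Hadamard sense) at $\bar x\in\operatorname{dom} f$. Then $\bar x$ is an isolated local minimizer of second order of $f$ if and only if $0\in\partial^{(1)}_- f(\bar x)$.
   Context: $\mathbb{E}$ is a real finite-dimensional Euclidean space; $\operatorname{dom} f=\{x:f(x)<+\infty\}$. For $x\in\operatorname{dom} f$: $f^{(1)}_-(x;u)=\liminf_{t\downarrow 0,\,u'\to u} t^{-1}[f(x+tu')-f(x)]$ and $\partial^{(1)}_- f(x)=\{x^*\in L^1(\mathbb{E}) : x^*(u)\le f^{(1)}_-(x;u)\ \forall u\in\mathbb{E}\}$ ($L^1(\mathbb{E})$ = linear functionals). $f$ is strongly pseudoconvex at $\bar x\in\operatorname{dom} f$ iff for every $d\in\mathbb{E}$ with $\|d\|=1$ and $f^{(1)}_-(\bar x;d)=0$ there exist $\varepsilon>0$, $\delta>0$, $\alpha>0$ such that $f(\bar x+td')\ge f(\bar x)+\alpha t^2$ for all $t\in[0,\delta)$ and all $d'\in\mathbb{E}$ with $\|d'\|=1$, $\|d'-d\|<\varepsilon$. $\bar x$ is an isolated local minimizer of second order iff there exist a neighborhood $N$ of $\bar x$ and $C>0$ with $f(x)>f(\bar x)+C\|x-\bar x\|^2$ for all $x\in N\setminus\{\bar x\}$. *)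

theory Defs
  imports "HOL-Analysis.Analysis"
begin

text \<open>Extended real functions f : E \<Rightarrow> \<real> \<union> {+\<infinity>} are modelled as functions into ereal
  that never take the value -\<infinity>.\<close>

definition proper_fun :: "('a \<Rightarrow> ereal) \<Rightarrow> bool" where
  "proper_fun f \<longleftrightarrow> (\<forall>x. f x \<noteq> -\<infinity>) \<and> (\<exists>x. f x < \<infinity>)"

definition dom_fun :: "('a \<Rightarrow> ereal) \<Rightarrow> 'a set" where
  "dom_fun f = {x. f x < \<infinity>}"

definition lower_hadamard_dd :: "('a::real_normed_vector \<Rightarrow> ereal) \<Rightarrow> 'a \<Rightarrow> 'a \<Rightarrow> ereal" where
  "lower_hadamard_dd f x u =
     Liminf (at_right (0::real) \<times>\<^sub>F nhds u)
       (\<lambda>(t, u'). (f (x + t *\<^sub>R u') - f x) / ereal t)"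

definition lower_hadamard_subdiff :: "('a::real_normed_vector \<Rightarrow> ereal) \<Rightarrow> 'a \<Rightarrow> ('a \<Rightarrow> real) set" where
  "lower_hadamard_subdiff f x =
     {xs. linear xs \<and> (\<forall>u. ereal (xs u) \<le> lower_hadamard_dd f x u)}"

definition strongly_pseudoconvex_at :: "('a::real_normed_vector \<Rightarrow> ereal) \<Rightarrow> 'a \<Rightarrow> bool" where
  "strongly_pseudoconvex_at f xb \<longleftrightarrow>
     (\<forall>d. norm d = 1 \<and> lower_hadamard_dd f xb d = 0 \<longrightarrow>
        (\<exists>\<epsilon>>0. \<exists>\<delta>>0. \<exists>\<alpha>>0. \<forall>t d'. 0 \<le> t \<and> t < \<delta> \<and> norm d' = 1 \<and> norm (d' - d) < \<epsilon> \<longrightarrow>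
            f (xb + t *\<^sub>R d') \<ge> f xb + ereal (\<alpha> * t\<^sup>2)))"

definition isolated_local_min_2nd :: "('a::real_normed_vector \<Rightarrow> ereal) \<Rightarrow> 'a \<Rightarrow> bool" where
  "isolated_local_min_2nd f xb \<longleftrightarrow>
     (\<exists>N C. open N \<and> xb \<in> N \<and> C > 0 \<and>
        (\<forall>x\<in>N - {xb}. f x > f xb + ereal (C * (norm (x - xb))\<^sup>2)))"

end

theory Submission
  imports Defs
begin

lemma dir1:
  fixes f :: "'a::euclidean_space \<Rightarrow> ereal" and xb :: 'a
  assumes fin: "\<bar>f xb\<bar> \<noteq> \<infinity>"
    and iso: "isolated_local_min_2nd f xb"
  shows "0 \<le> lower_hadamard_dd f xb u"
proof -
  obtain N C where N: "open N" "xb \<in> N" "C > 0"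
    and H: "\<forall>x\<in>N - {xb}. f x > f xb + ereal (C * (norm (x - xb))\<^sup>2)"
    using iso unfolding isolated_local_min_2nd_def by blast
  obtain e where e: "e > 0" "ball xb e \<subseteq> N" using N openE by blast
  have np: "0 < norm u + 1" by (smt (verit) norm_ge_zero)
  have ev: "\<forall>\<^sub>F p in at_right (0::real) \<times>\<^sub>F nhds u.
      0 \<le> (\<lambda>(t, u'). (f (xb + t *\<^sub>R u') - f xb) / ereal t) p"
    unfolding eventually_prod_filter
  proof (intro exI conjI allI impI)
    show "\<forall>\<^sub>F t in at_right (0::real). 0 < t \<and> t < e / (norm u + 1)"
      unfolding eventually_at_right_field
      using e by (intro exI[of _ "e / (norm u + 1)"]) (simp add: np)
    show "\<forall>\<^sub>F u' in nhds u. norm u' < norm u + 1"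
      proof -
      have "((\<lambda>x. norm x) \<longlongrightarrow> norm u) (nhds u)" by (intro tendsto_intros filterlim_ident)
      then show ?thesis by (rule order_tendstoD(2)) simp
    qed
  next
    fix t :: real and u' :: 'a
    assume t: "0 < t \<and> t < e / (norm u + 1)" and u': "norm u' < norm u + 1"
    have "norm (t *\<^sub>R u') \<le> t * (norm u + 1)" using t u' by (simp add: mult_left_mono)
    also have "\<dots> < e" using t np by (simp add: pos_less_divide_eq mult.commute)
    finally have inN: "xb + t *\<^sub>R u' \<in> N" using e by (auto simp: dist_norm)
    have ge: "f xb \<le> f (xb + t *\<^sub>R u')"
    proof (cases "xb + t *\<^sub>R u' = xb")
      case True then show ?thesis by (metis order_refl)
    next
      case False
      then have "f (xb + t *\<^sub>R u') > f xb + ereal (C * (norm (xb + t *\<^sub>R u' - xb))\<^sup>2)"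
        using H inN by blast
      moreover have "f xb \<le> f xb + ereal (C * (norm (xb + t *\<^sub>R u' - xb))\<^sup>2)"
        using N(3) by (simp add: add_increasing2)
      ultimately show ?thesis by simp
    qed
    have "0 \<le> f (xb + t *\<^sub>R u') - f xb" using ge fin
      by (cases "f xb"; cases "f (xb + t *\<^sub>R u')") auto
    then show "0 \<le> (\<lambda>(t, u'). (f (xb + t *\<^sub>R u') - f xb) / ereal t) (t, u')"
      using t by (simp add: ereal_divide_eq divide_nonneg_pos)
  qed
  show ?thesis unfolding lower_hadamard_dd_def by (rule Liminf_bounded[OF ev])
qed

lemma ev_inv_Suc: "(b::real) > 0 \<Longrightarrow> eventually (\<lambda>k. 1 / real (Suc k) < b) sequentially"
proof -
  assume b: "b > 0"
  obtain n where n: "inverse (real (Suc n)) < b" using reals_Archimedean[OF b] by blast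
  show ?thesis unfolding eventually_sequentially
  proof (intro exI allI impI)
    fix k assume "n \<le> k"
    then have "1 / real (Suc k) \<le> 1 / real (Suc n)" by (simp add: frac_le)
    then show "1 / real (Suc k) < b" using n by (simp add: inverse_eq_divide)
  qed
qed

lemma ereal_quot_bound:
  assumes fin: "\<bar>a\<bar> \<noteq> \<infinity>" and le: "z \<le> a + ereal c" and t: "t > 0"
  shows "(z - a) / ereal t \<le> ereal (c / t)"
  using fin le t by (cases a; cases z) (auto simp: ereal_divide_eq divide_right_mono)

lemma dir2:
  fixes f :: "'a::euclidean_space \<Rightarrow> ereal" and xb :: 'a
  assumes fin: "\<bar>f xb\<bar> \<noteq> \<infinity>"
    and sp: "strongly_pseudoconvex_at f xb"
    and nn: "\<And>u. 0 \<le> lower_hadamard_dd f xb u"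
  shows "isolated_local_min_2nd f xb"
proof (rule ccontr)
  assume "\<not> isolated_local_min_2nd f xb"
  then have H: "\<And>N C. open N \<Longrightarrow> xb \<in> N \<Longrightarrow> C > 0 \<Longrightarrow>
      (\<exists>x\<in>N - {xb}. f x \<le> f xb + ereal (C * (norm (x - xb))\<^sup>2))"
    unfolding isolated_local_min_2nd_def by (meson not_less)
  have "\<forall>k::nat. \<exists>y. y \<in> ball xb (1 / real (Suc k)) - {xb} \<and>
      f y \<le> f xb + ereal (1 / real (Suc k) * (norm (y - xb))\<^sup>2)"
  proof
    fix k :: nat
    show "\<exists>y. y \<in> ball xb (1 / real (Suc k)) - {xb} \<and>
      f y \<le> f xb + ereal (1 / real (Suc k) * (norm (y - xb))\<^sup>2)"
      using H[of "ball xb (1 / real (Suc k))" "1 / real (Suc k)"] by auto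
  qed
  then obtain x where xb1: "\<And>k. x k \<in> ball xb (1 / real (Suc k)) - {xb}"
    and xle: "\<And>k. f (x k) \<le> f xb + ereal (1 / real (Suc k) * (norm (x k - xb))\<^sup>2)"
    by metis
  define t where "t k = norm (x k - xb)" for k
  define d where "d k = (1 / t k) *\<^sub>R (x k - xb)" for k
  have tpos: "t k > 0" for k using xb1[of k] by (auto simp: t_def)
  have tlt: "t k < 1 / real (Suc k)" for k using xb1[of k] by (auto simp: t_def dist_norm norm_minus_commute)
  have dn: "norm (d k) = 1" for k using tpos[of k] by (simp add: d_def t_def)
  have xk: "x k = xb + t k *\<^sub>R d k" for k using tpos[of k] by (simp add: d_def)
  define g where "g = (\<lambda>(s::real, u'). (f (xb + s *\<^sub>R u') - f xb) / ereal s)"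
  have gle: "g (t k, d k) \<le> ereal (t k / real (Suc k))" for k
  proof -
    have "g (t k, d k) = (f (x k) - f xb) / ereal (t k)" by (simp add: g_def xk)
    also have "\<dots> \<le> ereal ((1 / real (Suc k) * (t k)\<^sup>2) / t k)"
      by (rule ereal_quot_bound[OF fin _ tpos]) (use xle[of k] in \<open>simp add: t_def\<close>)
    also have "\<dots> = ereal (t k / real (Suc k))" using tpos[of k] by (simp add: power2_eq_square)
    finally show ?thesis .
  qed
  have "d k \<in> sphere 0 1" for k using dn by simp
  then obtain l r where l: "l \<in> sphere 0 1" and r: "strict_mono r" and lim: "(d \<circ> r) \<longlonglongrightarrow> l"
    using compact_imp_seq_compact[OF compact_sphere] unfolding seq_compact_def by metis
  have rge: "k \<le> r k" for k using seq_suble[OF r] by simp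
  have invr: "1 / real (Suc (r k)) \<le> 1 / real (Suc k)" for k using rge[of k] by (simp add: frac_le)
  have evt: "eventually (\<lambda>k. t (r k) < b) sequentially" if "b > 0" for b
    using ev_inv_Suc[OF that] 
  proof (rule eventually_mono)
    fix k assume "1 / real (Suc k) < b"
    then show "t (r k) < b" using tlt[of "r k"] invr[of k] by linarith
  qed
  have evP: "eventually (\<lambda>k. P (d (r k))) sequentially" if "eventually P (nhds l)" for P
    using lim that unfolding filterlim_iff o_def by auto
  have dd0: "lower_hadamard_dd f xb l = 0"
  proof (rule ccontr)
    assume "lower_hadamard_dd f xb l \<noteq> 0"
    then have "0 < lower_hadamard_dd f xb l" using nn[of l] by simp
    then obtain y where y: "0 < ereal y" "ereal y < lower_hadamard_dd f xb l"
      using ereal_dense2 by blast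
    have "eventually (\<lambda>p. ereal y < g p) (at_right (0::real) \<times>\<^sub>F nhds l)"
    proof -
      have "lower_hadamard_dd f xb l \<le> Liminf (at_right (0::real) \<times>\<^sub>F nhds l) g"
        by (simp add: lower_hadamard_dd_def g_def)
      then show ?thesis using y(2) unfolding le_Liminf_iff by blast
    qed
    then obtain Pf Pg where Pf: "eventually Pf (at_right (0::real))" and Pg: "eventually Pg (nhds l)"
      and PP: "\<And>s u. Pf s \<Longrightarrow> Pg u \<Longrightarrow> ereal y < g (s, u)"
      unfolding eventually_prod_filter by blast
    obtain b where b: "b > 0" "\<And>s. s > 0 \<Longrightarrow> s < b \<Longrightarrow> Pf s"
      using Pf unfolding eventually_at_right_field by blast
    have "eventually (\<lambda>k. t (r k) < b \<and> Pg (d (r k)) \<and> 1 / real (Suc k) < y) sequentially"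
      using evt[OF b(1)] evP[OF Pg] ev_inv_Suc[of y] y(1) by (auto intro: eventually_conj)
    then obtain k where k: "t (r k) < b" "Pg (d (r k))" "1 / real (Suc k) < y"
      unfolding eventually_sequentially by blast
    have "ereal y < g (t (r k), d (r k))" using PP[OF b(2)[OF tpos k(1)] k(2)] .
    also have "\<dots> \<le> ereal (t (r k) / real (Suc (r k)))" by (rule gle)
    finally have "y < t (r k) / real (Suc (r k))" by simp
    moreover have "t (r k) / real (Suc (r k)) \<le> t (r k)"
      using tpos[of "r k"] by (simp add: divide_le_eq)
    ultimately show False using invr[of k] k(3) tlt[of "r k"] by linarith
  qed
  from sp l dd0 obtain \<epsilon> \<delta> \<alpha> where ed: "\<epsilon> > 0" "\<delta> > 0" "\<alpha> > 0"
    and SP: "\<And>s d'. 0 \<le> s \<Longrightarrow> s < \<delta> \<Longrightarrow> norm d' = 1 \<Longrightarrow> norm (d' - l) < \<epsilon> \<Longrightarrow>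
        f (xb + s *\<^sub>R d') \<ge> f xb + ereal (\<alpha> * s\<^sup>2)"
    unfolding strongly_pseudoconvex_at_def by auto
  have "eventually (\<lambda>u. norm (u - l) < \<epsilon>) (nhds l)"
    unfolding eventually_nhds_metric dist_norm using ed(1) by blast
  then have e1: "eventually (\<lambda>k. norm (d (r k) - l) < \<epsilon>) sequentially" by (rule evP)
  have "eventually (\<lambda>k. t (r k) < \<delta> \<and> norm (d (r k) - l) < \<epsilon> \<and> 1 / real (Suc k) < \<alpha>) sequentially"
    by (intro eventually_conj evt[OF ed(2)] e1 ev_inv_Suc[OF ed(3)])
  then obtain k where k: "t (r k) < \<delta>" "norm (d (r k) - l) < \<epsilon>" "1 / real (Suc k) < \<alpha>"
    unfolding eventually_sequentially by blast
  have A: "f (x (r k)) \<ge> f xb + ereal (\<alpha> * (t (r k))\<^sup>2)"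
    using SP[OF _ k(1) dn k(2)] tpos[of "r k"] xk[of "r k"] by simp
  have B: "f (x (r k)) \<le> f xb + ereal (1 / real (Suc (r k)) * (t (r k))\<^sup>2)"
    using xle[of "r k"] by (simp add: t_def)
  have "1 / real (Suc (r k)) * (t (r k))\<^sup>2 < \<alpha> * (t (r k))\<^sup>2"
    using invr[of k] k(3) tpos[of "r k"] by (intro mult_strict_right_mono) auto
  then show False using A B fin by (cases "f xb"; cases "f (x (r k))") auto
qed

theorem theorem5:
  fixes f :: "'a::euclidean_space \<Rightarrow> ereal" and xb :: 'a
  assumes "proper_fun f"
    and "xb \<in> dom_fun f"
    and "strongly_pseudoconvex_at f xb"
  shows "isolated_local_min_2nd f xb \<longleftrightarrow> (\<lambda>_. 0) \<in> lower_hadamard_subdiff f xb"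
proof -
  have fin: "\<bar>f xb\<bar> \<noteq> \<infinity>" using assms(1,2) unfolding proper_fun_def dom_fun_def
    by (cases "f xb") auto
  have lin: "linear (\<lambda>_::'a. 0::real)" by (simp add: linear_zero)
  have eq: "(\<lambda>_. 0) \<in> lower_hadamard_subdiff f xb \<longleftrightarrow> (\<forall>u. 0 \<le> lower_hadamard_dd f xb u)"
    unfolding lower_hadamard_subdiff_def using lin by (simp add: zero_ereal_def)
  show ?thesis unfolding eq
  proof
    assume "isolated_local_min_2nd f xb"
    show "\<forall>u. 0 \<le> lower_hadamard_dd f xb u"
    proof
      fix u show "0 \<le> lower_hadamard_dd f xb u"
        using dir1[of f xb u] fin \<open>isolated_local_min_2nd f xb\<close> by blast
    qed
  next
    assume "\<forall>u. 0 \<le> lower_hadamard_dd f xb u"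
    then show "isolated_local_min_2nd f xb" using dir2[OF fin assms(3)] by blast
  qed
qed

end
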